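(* Let $0<e_0\le1$ and let $d\ge1$ be an integer. For any instance of $P_m, e_{i,k}\ge e_0\mid\mid C_{\max}$, Algorithm 1 with parameter $d$ returns a schedule with makespan at most $\left(1+\frac{m}{d\, e_0}\right)C^*_{\max}$, where $C^*_{\max}$ is the optimal makespan.
   Context: Shared-processing parallel machine scheduling: $m$ identical machines $M_1,\dots,M_m$, $n$ primary jobs available at time $0$ with processing times $p_j>0$, each processed without interruption on one machine, jobs on a machine processed one after another. The time axis of machine $M_i$ is partitioned into consecutive intervals $(0,t_{i,1}],(t_{i,1},t_{i,2}],\dots$ with sharing ratios $e_{i,k}\in(0,1]$; during the $k$-th interval $M_i$ processes primary work at rate $e_{i,k}$. In $P_m, e_{i,k}\ge e_0\mid\mid C_{\max}$ all sharing ratios satisfy $e_{i,k}\ge e_0$ and the goal is to minimize the makespan. LS-ECT: jobs of a list are scheduled one by one; each job is appended after the jobs already assigned to some machine, choosing the machine on which it would complete earliest. Algorithm 1 (parameter $d$): (1) find the $d$ largest jobs (the "large" jobs); (2) for each of the possible assignments of the large jobs to the machines, schedule the large jobs on their assigned machines and then schedule the remaining jobs using LS-ECT; (3) return, among all schedules obtained in step (2), one with minimum makespan. *)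

theory Defs
  imports Complex_Main
begin

text \<open>Machines are indexed 0..<m, jobs 0..<n.
  Machine i has breakpoints t i 0 = 0 < t i 1 < t i 2 < ... (unbounded);
  during the k-th interval (t i k, t i (Suc k)] it processes primary work at rate e i k.\<close>

text \<open>Primary work processed on machine i during (0, T].\<close>
definition cum :: "(nat \<Rightarrow> nat \<Rightarrow> real) \<Rightarrow> (nat \<Rightarrow> nat \<Rightarrow> real) \<Rightarrow> nat \<Rightarrow> real \<Rightarrow> real" where
  "cum t e i T = (\<Sum>k < (LEAST N. T \<le> t i N). e i k * (min T (t i (Suc k)) - t i k))"

definition compl :: "(nat \<Rightarrow> nat \<Rightarrow> real) \<Rightarrow> (nat \<Rightarrow> nat \<Rightarrow> real) \<Rightarrow> nat \<Rightarrow> real \<Rightarrow> real \<Rightarrow> real" where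
  "compl t e i S q = (THE C. S \<le> C \<and> cum t e i C - cum t e i S = q)"

text \<open>A schedule: machine assignment and start times of jobs.\<close>
type_synonym schedule = "(nat \<Rightarrow> nat) \<times> (nat \<Rightarrow> real)"

definition completion :: "(nat \<Rightarrow> nat \<Rightarrow> real) \<Rightarrow> (nat \<Rightarrow> nat \<Rightarrow> real) \<Rightarrow> (nat \<Rightarrow> real) \<Rightarrow> schedule \<Rightarrow> nat \<Rightarrow> real" where
  "completion t e p \<sigma> j = compl t e (fst \<sigma> j) (snd \<sigma> j) (p j)"

definition makespan :: "(nat \<Rightarrow> nat \<Rightarrow> real) \<Rightarrow> (nat \<Rightarrow> nat \<Rightarrow> real) \<Rightarrow> (nat \<Rightarrow> real) \<Rightarrow> nat \<Rightarrow> schedule \<Rightarrow> real" where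
  "makespan t e p n \<sigma> = Max (insert 0 {completion t e p \<sigma> j | j. j < n})"

definition feasible :: "(nat \<Rightarrow> nat \<Rightarrow> real) \<Rightarrow> (nat \<Rightarrow> nat \<Rightarrow> real) \<Rightarrow> nat \<Rightarrow> (nat \<Rightarrow> real) \<Rightarrow> nat \<Rightarrow> schedule \<Rightarrow> bool" where
  "feasible t e m p n \<sigma> \<longleftrightarrow>
     (\<forall>j<n. fst \<sigma> j < m \<and> 0 \<le> snd \<sigma> j) \<and>
     (\<forall>j<n. \<forall>j'<n. j \<noteq> j' \<and> fst \<sigma> j = fst \<sigma> j' \<longrightarrow>
        completion t e p \<sigma> j \<le> snd \<sigma> j' \<or> completion t e p \<sigma> j' \<le> snd \<sigma> j)"

definition opt_makespan :: "(nat \<Rightarrow> nat \<Rightarrow> real) \<Rightarrow> (nat \<Rightarrow> nat \<Rightarrow> real) \<Rightarrow> nat \<Rightarrow> (nat \<Rightarrow> real) \<Rightarrow> nat \<Rightarrow> real" where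
  "opt_makespan t e m p n = Inf {makespan t e p n \<sigma> | \<sigma>. feasible t e m p n \<sigma>}"

text \<open>Sequential list scheduling: jobs of the list are appended one by one after the jobs
  already on a machine; F i is the current finishing time of machine i; ok F j i says that
  job j may be put on machine i in state F.\<close>
inductive seq_place ::
  "(nat \<Rightarrow> nat \<Rightarrow> real) \<Rightarrow> (nat \<Rightarrow> nat \<Rightarrow> real) \<Rightarrow> (nat \<Rightarrow> real) \<Rightarrow>
   ((nat \<Rightarrow> real) \<Rightarrow> nat \<Rightarrow> nat \<Rightarrow> bool) \<Rightarrow>
   (nat \<Rightarrow> real) \<Rightarrow> (nat \<Rightarrow> nat) \<Rightarrow> (nat \<Rightarrow> real) \<Rightarrow> nat list \<Rightarrow>
   (nat \<Rightarrow> real) \<Rightarrow> (nat \<Rightarrow> nat) \<Rightarrow> (nat \<Rightarrow> real) \<Rightarrow> bool"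
  for t e p ok where
  Nil: "seq_place t e p ok F a s [] F a s"
| Cons: "ok F j i \<Longrightarrow>
    seq_place t e p ok (F(i := compl t e i (F i) (p j))) (a(j := i)) (s(j := F i)) js F' a' s' \<Longrightarrow>
    seq_place t e p ok F a s (j # js) F' a' s'"

definition ect_ok :: "(nat \<Rightarrow> nat \<Rightarrow> real) \<Rightarrow> (nat \<Rightarrow> nat \<Rightarrow> real) \<Rightarrow> nat \<Rightarrow> (nat \<Rightarrow> real) \<Rightarrow>
    (nat \<Rightarrow> real) \<Rightarrow> nat \<Rightarrow> nat \<Rightarrow> bool" where
  "ect_ok t e m p F j i \<longleftrightarrow>
     i < m \<and> (\<forall>i'<m. compl t e i (F i) (p j) \<le> compl t e i' (F i') (p j))"

definition largest_jobs :: "(nat \<Rightarrow> real) \<Rightarrow> nat \<Rightarrow> nat \<Rightarrow> nat set \<Rightarrow> bool" where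
  "largest_jobs p n d L \<longleftrightarrow>
     L \<subseteq> {..<n} \<and> card L = min d n \<and> (\<forall>j\<in>L. \<forall>j'\<in>{..<n} - L. p j' \<le> p j)"

text \<open>Step (2) of Algorithm 1 for the assignment f of the large jobs L: the large jobs are
  scheduled on their assigned machines (from time 0, in any order), then the remaining jobs
  (in any list order) by LS-ECT; sigma is a resulting schedule.\<close>
definition alg_run :: "(nat \<Rightarrow> nat \<Rightarrow> real) \<Rightarrow> (nat \<Rightarrow> nat \<Rightarrow> real) \<Rightarrow> nat \<Rightarrow> (nat \<Rightarrow> real) \<Rightarrow> nat \<Rightarrow>
    nat set \<Rightarrow> (nat \<Rightarrow> nat) \<Rightarrow> schedule \<Rightarrow> bool" where
  "alg_run t e m p n L f \<sigma> \<longleftrightarrow>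
     (\<exists>ls rs F1 a1 s1 F2.
        distinct ls \<and> set ls = L \<and> distinct rs \<and> set rs = {..<n} - L \<and>
        seq_place t e p (\<lambda>F j i. i = f j) (\<lambda>_. 0) (\<lambda>_. 0) (\<lambda>_. 0) ls F1 a1 s1 \<and>
        seq_place t e p (ect_ok t e m p) F1 a1 s1 rs F2 (fst \<sigma>) (snd \<sigma>))"

definition algorithm1_output :: "(nat \<Rightarrow> nat \<Rightarrow> real) \<Rightarrow> (nat \<Rightarrow> nat \<Rightarrow> real) \<Rightarrow> nat \<Rightarrow> (nat \<Rightarrow> real) \<Rightarrow>
    nat \<Rightarrow> nat \<Rightarrow> schedule \<Rightarrow> bool" where
  "algorithm1_output t e m p n d \<sigma> \<longleftrightarrow>
     (\<exists>L. largest_jobs p n d L \<and>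
        (\<exists>f. (\<forall>j\<in>L. f j < m) \<and> alg_run t e m p n L f \<sigma>) \<and>
        (\<forall>f. (\<forall>j\<in>L. f j < m) \<longrightarrow>
           (\<exists>\<sigma>'. alg_run t e m p n L f \<sigma>' \<and> makespan t e p n \<sigma> \<le> makespan t e p n \<sigma>')))"

end

theory Submission
  imports Defs "HOL-Analysis.Elementary_Metric_Spaces"
begin

definition mach :: "(nat \<Rightarrow> nat \<Rightarrow> real) \<Rightarrow> (nat \<Rightarrow> nat \<Rightarrow> real) \<Rightarrow> real \<Rightarrow> nat \<Rightarrow> bool" where
  "mach t e e0 i \<longleftrightarrow> 0 < e0 \<and> t i 0 = 0 \<and> strict_mono (t i) \<and> (\<forall>T. \<exists>k. T < t i k) \<and> (\<forall>k. e0 \<le> e i k \<and> e i k \<le> 1)"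

definition GG :: "(nat \<Rightarrow> nat \<Rightarrow> real) \<Rightarrow> (nat \<Rightarrow> nat \<Rightarrow> real) \<Rightarrow> nat \<Rightarrow> nat \<Rightarrow> real" where
  "GG t e i k = (\<Sum>k'<k. e i k' * (t i (Suc k') - t i k'))"

lemma cum_lin:
  assumes M: "mach t e e0 i" and T: "t i k \<le> T" "T \<le> t i (Suc k)"
  shows "cum t e i T = GG t e i k + e i k * (T - t i k)"
proof -
  have sm: "strict_mono (t i)" using M by (simp add: mach_def)
  have mono: "a \<le> b \<Longrightarrow> t i a \<le> t i b" for a b using sm strict_mono_less_eq by blast
  have lt: "a < b \<Longrightarrow> t i a < t i b" for a b using sm strict_mono_less by blast
  show ?thesis
  proof (cases "T = t i k")
    case True
    have L: "(LEAST N. T \<le> t i N) = k"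
    proof (rule Least_equality)
      show "T \<le> t i k" using True by simp
      fix y assume "T \<le> t i y"
      then show "k \<le> y" using True lt by (metis not_le)
    qed
    have "cum t e i T = (\<Sum>k'<k. e i k' * (min T (t i (Suc k')) - t i k'))"
      unfolding cum_def L ..
    also have "\<dots> = GG t e i k" unfolding GG_def
    proof (rule sum.cong)
      fix x assume "x \<in> {..<k}"
      then have "t i (Suc x) \<le> T" using True mono by simp
      then show "e i x * (min T (t i (Suc x)) - t i x) = e i x * (t i (Suc x) - t i x)" by simp
    qed simp
    finally show ?thesis using True by simp
  next
    case False
    then have Tk: "t i k < T" using T by simp
    have L: "(LEAST N. T \<le> t i N) = Suc k"
    proof (rule Least_equality)
      show "T \<le> t i (Suc k)" using T by simp
      fix y assume "T \<le> t i y"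
      show "Suc k \<le> y"
      proof (rule ccontr)
        assume "\<not> Suc k \<le> y"
        then have "y \<le> k" by simp
        then have "t i y \<le> t i k" by (rule mono)
        then show False using Tk \<open>T \<le> t i y\<close> by simp
      qed
    qed
    have "cum t e i T = (\<Sum>k'<Suc k. e i k' * (min T (t i (Suc k')) - t i k'))"
      unfolding cum_def L ..
    also have "\<dots> = (\<Sum>k'<k. e i k' * (min T (t i (Suc k')) - t i k')) + e i k * (T - t i k)"
      using T by simp
    also have "(\<Sum>k'<k. e i k' * (min T (t i (Suc k')) - t i k')) = GG t e i k" unfolding GG_def
    proof (rule sum.cong)
      fix x assume "x \<in> {..<k}"
      then have "t i (Suc x) \<le> T" using Tk mono by (meson Suc_leI le_less_trans lessThan_iff less_imp_le)
      then show "e i x * (min T (t i (Suc x)) - t i x) = e i x * (t i (Suc x) - t i x)" by simp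
    qed simp
    finally show ?thesis .
  qed
qed

lemma cum_bounds_k:
  assumes M: "mach t e e0 i"
  shows "\<forall>S T. 0 \<le> S \<and> S \<le> T \<and> T \<le> t i k \<longrightarrow>
     e0 * (T - S) \<le> cum t e i T - cum t e i S \<and> cum t e i T - cum t e i S \<le> T - S"
proof (induction k)
  case 0
  have z: "t i 0 = 0" using M by (simp add: mach_def)
  show ?case
  proof (intro allI impI)
    fix S T :: real assume "0 \<le> S \<and> S \<le> T \<and> T \<le> t i 0"
    then have "S = 0" "T = 0" using z by auto
    then show "e0 * (T - S) \<le> cum t e i T - cum t e i S \<and> cum t e i T - cum t e i S \<le> T - S" by simp
  qed
next
  case (Suc k)
  have sm: "strict_mono (t i)" using M by (simp add: mach_def)
  have ek: "e0 \<le> e i k" "e i k \<le> 1" using M by (auto simp: mach_def)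
  have tk: "t i k \<le> t i (Suc k)" using sm by (simp add: strict_mono_less_eq)
  have lin: "t i k \<le> A \<Longrightarrow> A \<le> B \<Longrightarrow> B \<le> t i (Suc k) \<Longrightarrow>
      cum t e i B - cum t e i A = e i k * (B - A)" for A B
    using cum_lin[OF M, of k A] cum_lin[OF M, of k B] by (simp add: algebra_simps)
  have linb: "t i k \<le> A \<Longrightarrow> A \<le> B \<Longrightarrow> B \<le> t i (Suc k) \<Longrightarrow>
      e0 * (B - A) \<le> cum t e i B - cum t e i A \<and> cum t e i B - cum t e i A \<le> B - A" for A B
  proof -
    assume h: "t i k \<le> A" "A \<le> B" "B \<le> t i (Suc k)"
    have "0 \<le> B - A" using h by simp
    then have "e0 * (B - A) \<le> e i k * (B - A)" "e i k * (B - A) \<le> 1 * (B - A)"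
      using mult_right_mono[OF ek(1)] mult_right_mono[OF ek(2)] by blast+
    then show ?thesis using lin[OF h] by simp
  qed
  show ?case
  proof (intro allI impI)
    fix S T assume H: "0 \<le> S \<and> S \<le> T \<and> T \<le> t i (Suc k)"
    show "e0 * (T - S) \<le> cum t e i T - cum t e i S \<and> cum t e i T - cum t e i S \<le> T - S"
    proof (cases "T \<le> t i k")
      case True then show ?thesis using Suc H by blast
    next
      case False
      show ?thesis
      proof (cases "t i k \<le> S")
        case True then show ?thesis using linb H by blast
      next
        case False2: False
        have a: "e0 * (T - t i k) \<le> cum t e i T - cum t e i (t i k) \<and> cum t e i T - cum t e i (t i k) \<le> T - t i k"
          using linb[of "t i k" T] H False by simp
        have b: "e0 * (t i k - S) \<le> cum t e i (t i k) - cum t e i S \<and> cum t e i (t i k) - cum t e i S \<le> t i k - S"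
          using Suc H False2 by simp
        show ?thesis using a b by (simp add: algebra_simps)
      qed
    qed
  qed
qed

lemma cum_bounds:
  assumes M: "mach t e e0 i" and "0 \<le> S" "S \<le> T"
  shows "e0 * (T - S) \<le> cum t e i T - cum t e i S" "cum t e i T - cum t e i S \<le> T - S"
proof -
  obtain k where "T < t i k" using M by (auto simp: mach_def)
  then show "e0 * (T - S) \<le> cum t e i T - cum t e i S" "cum t e i T - cum t e i S \<le> T - S"
    using cum_bounds_k[OF M, of k] assms by auto
qed

lemma cum_zero:
  assumes M: "mach t e e0 i"
  shows "cum t e i 0 = 0"
proof -
  have sm: "strict_mono (t i)" and z: "t i 0 = 0" using M by (auto simp: mach_def)
  have "t i 0 < t i (Suc 0)" using sm by (simp add: strict_mono_def)
  then have "0 \<le> t i (Suc 0)" using z by simp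
  then show ?thesis using cum_lin[OF M, of 0 0] z by (simp add: GG_def)
qed

lemma cum_mono:
  assumes M: "mach t e e0 i" and "0 \<le> S" "S \<le> T"
  shows "cum t e i S \<le> cum t e i T"
proof -
  have "0 < e0" using M by (simp add: mach_def)
  then have "0 \<le> e0 * (T - S)" using assms by simp
  then show ?thesis using cum_bounds(1)[OF assms] by linarith
qed

lemma cum_le_T:
  assumes M: "mach t e e0 i" and "0 \<le> T"
  shows "cum t e i T \<le> T"
  using cum_bounds(2)[OF M order.refl assms(2)] cum_zero[OF M] by simp

lemma cum_strict:
  assumes M: "mach t e e0 i" and "0 \<le> S" "cum t e i T \<le> cum t e i S"
  shows "T \<le> S"
proof (rule ccontr)
  assume "\<not> T \<le> S"
  then have "S < T" by simp
  moreover have "0 < e0" using M by (simp add: mach_def)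
  ultimately have "0 < e0 * (T - S)" by simp
  then show False using cum_bounds(1)[OF M \<open>0 \<le> S\<close>, of T] assms(3) \<open>S < T\<close> by linarith
qed

lemma cum_cont:
  assumes M: "mach t e e0 i" and "0 \<le> a"
  shows "continuous_on {a..b} (cum t e i)"
  unfolding continuous_on_iff
proof (intro ballI allI impI)
  fix x y :: real and \<epsilon> :: real assume x: "x \<in> {a..b}" and e: "0 < \<epsilon>"
  show "\<exists>d>0. \<forall>x'\<in>{a..b}. dist x' x < d \<longrightarrow> dist (cum t e i x') (cum t e i x) < \<epsilon>"
  proof (intro exI conjI ballI impI)
    show "0 < \<epsilon>" by fact
    fix x' assume x': "x' \<in> {a..b}" and d: "dist x' x < \<epsilon>"
    have "\<bar>cum t e i x' - cum t e i x\<bar> \<le> \<bar>x' - x\<bar>"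
    proof (cases "x \<le> x'")
      case True
      then show ?thesis using cum_bounds[OF M, of x x'] cum_mono[OF M, of x x'] x assms by auto
    next
      case False
      then show ?thesis using cum_bounds[OF M, of x' x] cum_mono[OF M, of x' x] x' assms by auto
    qed
    then show "dist (cum t e i x') (cum t e i x) < \<epsilon>" using d by (simp add: dist_real_def)
  qed
qed

lemma compl_spec:
  assumes M: "mach t e e0 i" and S: "0 \<le> S" and q: "0 \<le> q"
  shows "S \<le> compl t e i S q \<and> cum t e i (compl t e i S q) - cum t e i S = q"
proof -
  have e0: "0 < e0" using M by (simp add: mach_def)
  define b where "b = S + q / e0"
  have Sb: "S \<le> b" using e0 q by (simp add: b_def)
  have eb: "e0 * (b - S) = q" using e0 by (simp add: b_def)
  have qb: "q \<le> cum t e i b - cum t e i S"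
    using cum_bounds(1)[OF M S Sb] eb by simp
  have cont: "continuous_on {S..b} (\<lambda>x. cum t e i x - cum t e i S)"
    by (intro continuous_on_diff cum_cont[OF M S] continuous_on_const)
  have q0: "(\<lambda>x. cum t e i x - cum t e i S) S \<le> q" using q by simp
  have "\<exists>x\<ge>S. x \<le> b \<and> (\<lambda>x. cum t e i x - cum t e i S) x = q"
    by (rule IVT'[OF q0 _ Sb cont]) (use qb in simp)
  then obtain C where C: "S \<le> C" "cum t e i C - cum t e i S = q"
    by blast
  have uniq: "C' = C" if "S \<le> C' \<and> cum t e i C' - cum t e i S = q" for C'
  proof -
    have a: "0 \<le> C" "0 \<le> C'" using C that S by auto
    have "C' \<le> C" using cum_strict[OF M a(1), of C'] that C by simp
    moreover have "C \<le> C'" using cum_strict[OF M a(2), of C] that C by simp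
    ultimately show ?thesis by simp
  qed
  have "compl t e i S q = C" unfolding compl_def
  proof (rule the_equality)
    show "S \<le> C \<and> cum t e i C - cum t e i S = q" using C by simp
    show "\<And>C'. S \<le> C' \<and> cum t e i C' - cum t e i S = q \<Longrightarrow> C' = C" by (rule uniq)
  qed
  then show ?thesis using C by simp
qed


lemma ms_fin: "finite {completion t e p \<sigma> j | j. j < n}"
  using finite_image_set[of "\<lambda>j. j < n"] by simp

lemma makespan_ge: "j < n \<Longrightarrow> completion t e p \<sigma> j \<le> makespan t e p n \<sigma>"
  unfolding makespan_def by (rule Max_ge) (use ms_fin in auto)

lemma makespan_nonneg: "0 \<le> makespan t e p n \<sigma>"
  unfolding makespan_def by (rule Max_ge) (use ms_fin in auto)

lemma makespan_le:
  assumes "0 \<le> B" "\<forall>j<n. completion t e p \<sigma> j \<le> B"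
  shows "makespan t e p n \<sigma> \<le> B"
  unfolding makespan_def using assms ms_fin by (subst Max_le_iff) auto

lemma compl_pos:
  assumes M: "mach t e e0 i" and S: "0 \<le> S" and q: "0 < q"
  shows "S < compl t e i S q"
proof (rule ccontr)
  have h: "S \<le> compl t e i S q" "cum t e i (compl t e i S q) - cum t e i S = q"
    using compl_spec[OF M S] q by auto
  assume "\<not> S < compl t e i S q"
  then have "compl t e i S q = S" using h by simp
  then show False using h q by simp
qed

lemma capacity:
  assumes M: "mach t e e0 i" and fin: "finite J"
  shows "0 \<le> T \<Longrightarrow> (\<forall>j\<in>J. 0 < p j \<and> 0 \<le> s j \<and> compl t e i (s j) (p j) \<le> T) \<Longrightarrow>
    (\<forall>j\<in>J. \<forall>j'\<in>J. j \<noteq> j' \<longrightarrow> compl t e i (s j) (p j) \<le> s j' \<or> compl t e i (s j') (p j') \<le> s j) \<Longrightarrow>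
    (\<Sum>j\<in>J. p j) \<le> cum t e i T"
  using fin
proof (induction J arbitrary: T rule: finite_ranking_induct[where f = s])
  case empty
  have "cum t e i 0 \<le> cum t e i T" by (rule cum_mono[OF M order.refl empty(1)])
  then show ?case using cum_zero[OF M] by simp
next
  case (insert x S)
  show ?case
  proof (cases "x \<in> S")
    case True
    then have "insert x S = S" by auto
    then show ?thesis using insert by simp
  next
    case False
    let ?c = "compl t e i (s x) (p x)"
    have px: "0 < p x" and sx: "0 \<le> s x" and cT: "?c \<le> T" using insert.prems(2) by auto
    have cs: "s x \<le> ?c" "cum t e i ?c - cum t e i (s x) = p x"
      using compl_spec[OF M sx] px by auto
    have sc: "s x < ?c" using compl_pos[OF M sx px] .
    have others: "\<forall>y\<in>S. 0 < p y \<and> 0 \<le> s y \<and> compl t e i (s y) (p y) \<le> s x"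
    proof
      fix y assume y: "y \<in> S"
      then have yx: "y \<noteq> x" using False by auto
      have "?c \<le> s y \<or> compl t e i (s y) (p y) \<le> s x"
        using insert.prems(3) y yx by auto
      moreover have "\<not> ?c \<le> s y" using insert.hyps(2)[OF y] sc by simp
      ultimately show "0 < p y \<and> 0 \<le> s y \<and> compl t e i (s y) (p y) \<le> s x"
        using insert.prems(2) y by auto
    qed
    have "(\<Sum>j\<in>S. p j) \<le> cum t e i (s x)"
      using insert.IH[OF sx others] insert.prems(3) by blast
    moreover have "cum t e i ?c \<le> cum t e i T"
      using cum_mono[OF M _ cT] sx cs by simp
    ultimately show ?thesis using False insert.hyps(1) cs by simp
  qed
qed

definition sinv :: "(nat \<Rightarrow> nat \<Rightarrow> real) \<Rightarrow> (nat \<Rightarrow> nat \<Rightarrow> real) \<Rightarrow> nat \<Rightarrow> (nat \<Rightarrow> real) \<Rightarrow>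
   nat set \<Rightarrow> (nat \<Rightarrow> real) \<Rightarrow> (nat \<Rightarrow> nat) \<Rightarrow> (nat \<Rightarrow> real) \<Rightarrow> bool" where
  "sinv t e m p Pl F a s \<longleftrightarrow> finite Pl \<and>
     (\<forall>i<m. 0 \<le> F i \<and> cum t e i (F i) = (\<Sum>j\<in>{j\<in>Pl. a j = i}. p j)) \<and>
     (\<forall>j\<in>Pl. a j < m \<and> 0 \<le> s j \<and> compl t e (a j) (s j) (p j) \<le> F (a j)) \<and>
     (\<forall>j\<in>Pl. \<forall>j'\<in>Pl. j \<noteq> j' \<and> a j = a j' \<longrightarrow>
        compl t e (a j) (s j) (p j) \<le> s j' \<or> compl t e (a j') (s j') (p j') \<le> s j)"

lemma sinv_init:
  assumes "\<forall>i<m. mach t e e0 i"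
  shows "sinv t e m p {} (\<lambda>_. 0) (\<lambda>_. 0) (\<lambda>_. 0)"
  using assms cum_zero unfolding sinv_def by auto

lemma sinv_step:
  assumes I: "sinv t e m p Pl F a s" and j: "j \<notin> Pl" and i: "i < m" and pj: "0 \<le> p j"
    and M: "\<forall>i<m. mach t e e0 i"
  shows "sinv t e m p (insert j Pl) (F(i := compl t e i (F i) (p j))) (a(j:=i)) (s(j := F i))"
proof -
  let ?c = "compl t e i (F i) (p j)"
  let ?F = "F(i := ?c)" and ?a = "a(j:=i)" and ?s = "s(j := F i)"
  have fin: "finite Pl" and I2: "\<forall>i<m. 0 \<le> F i \<and> cum t e i (F i) = (\<Sum>j\<in>{j\<in>Pl. a j = i}. p j)"
    and I3: "\<forall>j\<in>Pl. a j < m \<and> 0 \<le> s j \<and> compl t e (a j) (s j) (p j) \<le> F (a j)"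
    and I4: "\<forall>j\<in>Pl. \<forall>j'\<in>Pl. j \<noteq> j' \<and> a j = a j' \<longrightarrow>
        compl t e (a j) (s j) (p j) \<le> s j' \<or> compl t e (a j') (s j') (p j') \<le> s j"
    using I unfolding sinv_def by blast+
  have Fi: "0 \<le> F i" using I2 i by simp
  have cs: "F i \<le> ?c" "cum t e i ?c - cum t e i (F i) = p j"
    using compl_spec[OF M[rule_format, OF i] Fi pj] by auto
  have Fmono: "F k \<le> ?F k" for k using cs by simp
  have A: "\<forall>i'<m. 0 \<le> ?F i' \<and> cum t e i' (?F i') = (\<Sum>x\<in>{x\<in>insert j Pl. ?a x = i'}. p x)"
  proof (intro allI impI)
    fix i' assume i': "i' < m"
    show "0 \<le> ?F i' \<and> cum t e i' (?F i') = (\<Sum>x\<in>{x\<in>insert j Pl. ?a x = i'}. p x)"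
    proof (cases "i' = i")
      case True
      have set: "{x\<in>insert j Pl. ?a x = i'} = insert j {x\<in>Pl. a x = i}"
        using True j by auto
      have "(\<Sum>x\<in>{x\<in>insert j Pl. ?a x = i'}. p x) = p j + (\<Sum>x\<in>{x\<in>Pl. a x = i}. p x)"
        unfolding set using fin j by (subst sum.insert) auto
      then show ?thesis using True cs I2 i Fi by auto
    next
      case False
      have set: "{x\<in>insert j Pl. ?a x = i'} = {x\<in>Pl. a x = i'}"
        using False j by auto
      show ?thesis unfolding set using False I2 i' by simp
    qed
  qed
  have B: "\<forall>x\<in>insert j Pl. ?a x < m \<and> 0 \<le> ?s x \<and> compl t e (?a x) (?s x) (p x) \<le> ?F (?a x)"
  proof
    fix x assume x: "x \<in> insert j Pl"
    show "?a x < m \<and> 0 \<le> ?s x \<and> compl t e (?a x) (?s x) (p x) \<le> ?F (?a x)"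
    proof (cases "x = j")
      case True then show ?thesis using i Fi by simp
    next
      case False
      then have "x \<in> Pl" using x by simp
      then show ?thesis using False I3 Fmono[of "a x"] by (auto intro: order.trans)
    qed
  qed
  have C: "\<forall>x\<in>insert j Pl. \<forall>x'\<in>insert j Pl. x \<noteq> x' \<and> ?a x = ?a x' \<longrightarrow>
        compl t e (?a x) (?s x) (p x) \<le> ?s x' \<or> compl t e (?a x') (?s x') (p x') \<le> ?s x"
  proof (intro ballI impI)
    fix x x' assume x: "x \<in> insert j Pl" and x': "x' \<in> insert j Pl" and h: "x \<noteq> x' \<and> ?a x = ?a x'"
    show "compl t e (?a x) (?s x) (p x) \<le> ?s x' \<or> compl t e (?a x') (?s x') (p x') \<le> ?s x"
    proof (cases "x = j")
      case True
      then have "x' \<in> Pl" "x' \<noteq> j" "a x' = i" using x' h j by auto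
      then show ?thesis using True I3 by auto
    next
      case False
      note xF = False
      show ?thesis
      proof (cases "x' = j")
        case True
        then have "x \<in> Pl" "a x = i" using x h xF by auto
        then show ?thesis using True xF I3 by auto
      next
        case False
        then show ?thesis using xF x x' h I4 by auto
      qed
    qed
  qed
  show ?thesis unfolding sinv_def using fin A B C by blast
qed

lemma seq_gen:
  assumes "seq_place t e p ok F a s js F' a' s'"
  shows "sinv t e m p Pl F a s \<Longrightarrow> distinct js \<Longrightarrow> set js \<inter> Pl = {} \<Longrightarrow>
    (\<forall>j\<in>set js. 0 \<le> p j) \<Longrightarrow> (\<forall>G x i'. x \<in> set js \<longrightarrow> ok G x i' \<longrightarrow> i' < m) \<Longrightarrow>
    (\<forall>i<m. mach t e e0 i) \<Longrightarrow>
    sinv t e m p (Pl \<union> set js) F' a' s' \<and> (\<forall>x. x \<notin> set js \<longrightarrow> a' x = a x \<and> s' x = s x) \<and>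
    (\<forall>x\<in>set js. \<exists>G a0 s0 Pl0. sinv t e m p Pl0 G a0 s0 \<and> Pl0 \<subseteq> Pl \<union> set js \<and>
        ok G x (a' x) \<and> s' x = G (a' x))"
  using assms
proof (induction arbitrary: Pl rule: seq_place.induct)
  case (Nil F a s)
  then show ?case by simp
next
  case (Cons F j i a s js F' a' s')
  have im: "i < m" using Cons.prems(5) Cons.hyps(1) by auto
  have jP: "j \<notin> Pl" using Cons.prems(3) by auto
  have S1: "sinv t e m p (insert j Pl) (F(i := compl t e i (F i) (p j))) (a(j:=i)) (s(j := F i))"
    by (rule sinv_step[OF Cons.prems(1) jP im _ Cons.prems(6)]) (use Cons.prems(4) in simp)
  have IH: "sinv t e m p (insert j Pl \<union> set js) F' a' s' \<and>
      (\<forall>x. x \<notin> set js \<longrightarrow> a' x = (a(j:=i)) x \<and> s' x = (s(j := F i)) x) \<and>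
      (\<forall>x\<in>set js. \<exists>G a0 s0 Pl0. sinv t e m p Pl0 G a0 s0 \<and> Pl0 \<subseteq> insert j Pl \<union> set js \<and>
        ok G x (a' x) \<and> s' x = G (a' x))"
    apply (rule Cons.IH[OF S1])
    using Cons.prems by auto
  have jn: "j \<notin> set js" using Cons.prems(2) by simp
  have aj: "a' j = i" "s' j = F i" using IH jn by auto
  show ?case
  proof (intro conjI)
    show "sinv t e m p (Pl \<union> set (j # js)) F' a' s'" using IH by simp
    show "\<forall>x. x \<notin> set (j # js) \<longrightarrow> a' x = a x \<and> s' x = s x" using IH by auto
    show "\<forall>x\<in>set (j # js). \<exists>G a0 s0 Pl0. sinv t e m p Pl0 G a0 s0 \<and> Pl0 \<subseteq> Pl \<union> set (j # js) \<and>
        ok G x (a' x) \<and> s' x = G (a' x)"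
    proof
      fix x assume x: "x \<in> set (j # js)"
      show "\<exists>G a0 s0 Pl0. sinv t e m p Pl0 G a0 s0 \<and> Pl0 \<subseteq> Pl \<union> set (j # js) \<and>
        ok G x (a' x) \<and> s' x = G (a' x)"
      proof (cases "x = j")
        case True
        then show ?thesis using aj Cons.prems(1) Cons.hyps(1) by blast
      next
        case False
        then have "x \<in> set js" using x by simp
        then show ?thesis using IH by auto
      qed
    qed
  qed
qed


lemma alg_run_props:
  assumes R: "alg_run t e m p n L f \<sigma>" and Ls: "L \<subseteq> {..<n}" and fL: "\<forall>j\<in>L. f j < m"
    and P: "\<forall>j<n. 0 < p j" and M: "\<forall>i<m. mach t e e0 i"
  shows "\<exists>F1 a1 s1. sinv t e m p L F1 a1 s1 \<and> (\<forall>j\<in>L. a1 j = f j \<and> fst \<sigma> j = a1 j \<and> snd \<sigma> j = s1 j)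
     \<and> (\<exists>F2. sinv t e m p {..<n} F2 (fst \<sigma>) (snd \<sigma>))
     \<and> (\<forall>j\<in>{..<n} - L. \<exists>G a0 s0 Pl0. sinv t e m p Pl0 G a0 s0 \<and> Pl0 \<subseteq> {..<n} \<and>
          ect_ok t e m p G j (fst \<sigma> j) \<and> snd \<sigma> j = G (fst \<sigma> j))"
proof -
  obtain ls rs F1 a1 s1 F2 where H: "distinct ls" "set ls = L" "distinct rs" "set rs = {..<n} - L"
    "seq_place t e p (\<lambda>F j i. i = f j) (\<lambda>_. 0) (\<lambda>_. 0) (\<lambda>_. 0) ls F1 a1 s1"
    "seq_place t e p (ect_ok t e m p) F1 a1 s1 rs F2 (fst \<sigma>) (snd \<sigma>)"
    using R unfolding alg_run_def by blast
  have ph1: "sinv t e m p ({} \<union> set ls) F1 a1 s1 \<and> (\<forall>x. x \<notin> set ls \<longrightarrow> a1 x = 0 \<and> s1 x = 0) \<and>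
    (\<forall>x\<in>set ls. \<exists>G a0 s0 Pl0. sinv t e m p Pl0 G a0 s0 \<and> Pl0 \<subseteq> {} \<union> set ls \<and>
        a1 x = f x \<and> s1 x = G (a1 x))"
    by (rule seq_gen[OF H(5) sinv_init[OF M]]) (use H Ls fL P M in auto)
  have ph2: "sinv t e m p (L \<union> set rs) F2 (fst \<sigma>) (snd \<sigma>) \<and> (\<forall>x. x \<notin> set rs \<longrightarrow> fst \<sigma> x = a1 x \<and> snd \<sigma> x = s1 x) \<and>
    (\<forall>x\<in>set rs. \<exists>G a0 s0 Pl0. sinv t e m p Pl0 G a0 s0 \<and> Pl0 \<subseteq> L \<union> set rs \<and>
        ect_ok t e m p G x (fst \<sigma> x) \<and> snd \<sigma> x = G (fst \<sigma> x))"
    by (rule seq_gen[OF H(6)]) (use H ph1 Ls fL P M in \<open>auto simp: ect_ok_def\<close>)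
  have U: "L \<union> set rs = {..<n}" using H(4) Ls by auto
  show ?thesis
    apply (rule exI[of _ F1], rule exI[of _ a1], rule exI[of _ s1])
    using ph1 ph2 H U by auto
qed

lemma ect_bound:
  assumes M: "\<forall>i<m. mach t e e0 i" and e0: "0 < e0" and I: "sinv t e m p Pl G a0 s0"
    and SP: "(\<Sum>x\<in>Pl. p x) \<le> (\<Sum>i<m. cum t e i Cs)" and Cs: "0 \<le> Cs"
    and E: "ect_ok t e m p G j i" and pj: "0 \<le> p j"
  shows "compl t e i (G i) (p j) \<le> Cs + p j / e0"
proof (cases "compl t e i (G i) (p j) \<le> Cs")
  case True
  moreover have "0 \<le> p j / e0" using pj e0 by simp
  ultimately show ?thesis by linarith
next
  case False
  let ?Cj = "compl t e i (G i) (p j)"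
  define x where "x = ?Cj - Cs"
  have x0: "0 < x" using False x_def by simp
  have im: "i < m" and ect: "\<forall>i'<m. ?Cj \<le> compl t e i' (G i') (p j)" using E by (auto simp: ect_ok_def)
  have fin: "finite Pl" and I2: "\<forall>i<m. 0 \<le> G i \<and> cum t e i (G i) = (\<Sum>j\<in>{j\<in>Pl. a0 j = i}. p j)"
    and I3: "\<forall>j\<in>Pl. a0 j < m" using I unfolding sinv_def by auto
  have each: "cum t e i' Cs + e0 * x \<le> (\<Sum>j\<in>{j\<in>Pl. a0 j = i'}. p j) + p j" if i': "i' < m" for i'
  proof -
    let ?D = "compl t e i' (G i') (p j)"
    have Mi: "mach t e e0 i'" using M i' by simp
    have G0: "0 \<le> G i'" using I2 i' by simp
    have D: "cum t e i' ?D - cum t e i' (G i') = p j" using compl_spec[OF Mi G0 pj] by simp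
    have CD: "?Cj \<le> ?D" using ect i' by simp
    have "e0 * (?Cj - Cs) \<le> cum t e i' ?Cj - cum t e i' Cs"
      using cum_bounds(1)[OF Mi Cs, of ?Cj] False by simp
    moreover have "cum t e i' ?Cj \<le> cum t e i' ?D"
      using cum_mono[OF Mi _ CD] Cs False by simp
    ultimately show ?thesis using D I2 i' x_def by simp
  qed
  have "(\<Sum>i'<m. cum t e i' Cs + e0 * x) \<le> (\<Sum>i'<m. (\<Sum>j\<in>{j\<in>Pl. a0 j = i'}. p j) + p j)"
    by (rule sum_mono) (use each in simp)
  moreover have "(\<Sum>i'<m. (\<Sum>j\<in>{j\<in>Pl. a0 j = i'}. p j)) = (\<Sum>x\<in>Pl. p x)"
    by (rule sum.group) (use fin I3 in auto)
  ultimately have "(\<Sum>i'<m. cum t e i' Cs) + real m * (e0 * x) \<le> (\<Sum>x\<in>Pl. p x) + real m * p j"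
    by (simp add: sum.distrib)
  then have "real m * (e0 * x) \<le> real m * p j" using SP by linarith
  moreover have "0 < real m" using im by simp
  ultimately have "e0 * x \<le> p j" by simp
  then have "x \<le> p j / e0" using e0 by (simp add: field_simps)
  then show ?thesis using x_def by simp
qed


theorem lemma1:
  fixes t e :: "nat \<Rightarrow> nat \<Rightarrow> real" and p :: "nat \<Rightarrow> real"
    and m n d :: nat and e0 :: real and \<sigma> :: schedule
  assumes "0 < e0" and "e0 \<le> 1" and "1 \<le> d" and "1 \<le> m"
    and "\<forall>j<n. 0 < p j"
    and "\<forall>i<m. t i 0 = 0 \<and> strict_mono (t i) \<and> (\<forall>T. \<exists>k. T < t i k)"
    and "\<forall>i<m. \<forall>k. e0 \<le> e i k \<and> e i k \<le> 1"
    and "algorithm1_output t e m p n d \<sigma>"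
  shows "makespan t e p n \<sigma> \<le> (1 + real m / (real d * e0)) * opt_makespan t e m p n"
proof -
  note e0 = assms(1) and P = assms(5)
  have M: "\<forall>i<m. mach t e e0 i" using assms(1,6,7) by (simp add: mach_def)
  obtain L f0 where Lg: "largest_jobs p n d L" and f0: "\<forall>j\<in>L. f0 j < m" "alg_run t e m p n L f0 \<sigma>"
    and opt: "\<forall>f. (\<forall>j\<in>L. f j < m) \<longrightarrow>
           (\<exists>\<sigma>'. alg_run t e m p n L f \<sigma>' \<and> makespan t e p n \<sigma> \<le> makespan t e p n \<sigma>')"
    using assms(8) unfolding algorithm1_output_def by blast
  have Ls: "L \<subseteq> {..<n}" and cardL: "card L = min d n"
    and Lbig: "\<forall>j\<in>L. \<forall>j'\<in>{..<n} - L. p j' \<le> p j"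
    using Lg unfolding largest_jobs_def by auto
  have finL: "finite L" using Ls finite_subset by blast
  define K where "K = 1 + real m / (real d * e0)"
  have K1: "1 \<le> K" using e0 assms(3) by (simp add: K_def)
  have pnn: "\<forall>j<n. 0 \<le> p j" using P by (simp add: less_imp_le)
  have key: "makespan t e p n \<sigma> \<le> K * makespan t e p n \<sigma>s" if fs: "feasible t e m p n \<sigma>s" for \<sigma>s
  proof -
    define Cs where "Cs = makespan t e p n \<sigma>s"
    have Cs0: "0 \<le> Cs" unfolding Cs_def by (rule makespan_nonneg)
    have F1: "\<forall>j<n. fst \<sigma>s j < m \<and> 0 \<le> snd \<sigma>s j" and
      F2: "\<forall>j<n. \<forall>j'<n. j \<noteq> j' \<and> fst \<sigma>s j = fst \<sigma>s j' \<longrightarrow>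
        completion t e p \<sigma>s j \<le> snd \<sigma>s j' \<or> completion t e p \<sigma>s j' \<le> snd \<sigma>s j"
      using fs unfolding feasible_def by blast+
    have cap: "(\<Sum>j\<in>{j\<in>{..<n}. fst \<sigma>s j = i}. p j) \<le> cum t e i Cs" if i: "i < m" for i
    proof (rule capacity[OF M[rule_format, OF i] _ Cs0])
      show "finite {j\<in>{..<n}. fst \<sigma>s j = i}" by simp
      show "\<forall>j\<in>{j\<in>{..<n}. fst \<sigma>s j = i}. 0 < p j \<and> 0 \<le> snd \<sigma>s j \<and> compl t e i (snd \<sigma>s j) (p j) \<le> Cs"
        using P F1 makespan_ge[of _ n t e p \<sigma>s] unfolding Cs_def completion_def by auto
      show "\<forall>j\<in>{j\<in>{..<n}. fst \<sigma>s j = i}. \<forall>j'\<in>{j\<in>{..<n}. fst \<sigma>s j = i}. j \<noteq> j' \<longrightarrow>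
          compl t e i (snd \<sigma>s j) (p j) \<le> snd \<sigma>s j' \<or> compl t e i (snd \<sigma>s j') (p j') \<le> snd \<sigma>s j"
        using F2 unfolding completion_def by auto
    qed
    have tot: "(\<Sum>j<n. p j) \<le> (\<Sum>i<m. cum t e i Cs)"
    proof -
      have "(\<Sum>j<n. p j) = (\<Sum>i<m. (\<Sum>j\<in>{j\<in>{..<n}. fst \<sigma>s j = i}. p j))"
        by (rule sum.group[symmetric]) (use F1 in auto)
      also have "\<dots> \<le> (\<Sum>i<m. cum t e i Cs)" by (rule sum_mono) (use cap in simp)
      finally show ?thesis .
    qed
    have totm: "(\<Sum>i<m. cum t e i Cs) \<le> real m * Cs"
    proof -
      have "(\<Sum>i<m. cum t e i Cs) \<le> (\<Sum>i<m. Cs)"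
        by (rule sum_mono) (use cum_le_T[OF _ Cs0] M in blast)
      then show ?thesis by simp
    qed
    define f where "f = fst \<sigma>s"
    have fL: "\<forall>j\<in>L. f j < m" using F1 Ls f_def by auto
    obtain \<sigma>' where R: "alg_run t e m p n L f \<sigma>'" and le: "makespan t e p n \<sigma> \<le> makespan t e p n \<sigma>'"
      using opt fL by blast
    obtain F1 a1 s1 where S1: "sinv t e m p L F1 a1 s1"
      and S1a: "\<forall>j\<in>L. a1 j = f j \<and> fst \<sigma>' j = a1 j \<and> snd \<sigma>' j = s1 j"
      and S2: "\<forall>j\<in>{..<n} - L. \<exists>G a0 s0 Pl0. sinv t e m p Pl0 G a0 s0 \<and> Pl0 \<subseteq> {..<n} \<and>
          ect_ok t e m p G j (fst \<sigma>' j) \<and> snd \<sigma>' j = G (fst \<sigma>' j)"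
      using alg_run_props[OF R Ls fL P M] by blast
    have F1le: "F1 i \<le> Cs" if i: "i < m" for i
    proof -
      have Mi: "mach t e e0 i" using M i by simp
      have "cum t e i (F1 i) = (\<Sum>j\<in>{j\<in>L. a1 j = i}. p j)" using S1 i unfolding sinv_def by blast
      also have "\<dots> = (\<Sum>j\<in>{j\<in>L. f j = i}. p j)"
        by (rule sum.cong) (use S1a in auto)
      also have "\<dots> \<le> (\<Sum>j\<in>{j\<in>{..<n}. f j = i}. p j)"
        by (rule sum_mono2) (use Ls pnn in auto)
      also have "\<dots> \<le> cum t e i Cs" using cap[OF i] f_def by simp
      finally show ?thesis by (rule cum_strict[OF Mi Cs0])
    qed
    have KCs: "Cs \<le> K * Cs" using K1 Cs0 by (simp add: mult_right_mono[of 1 K Cs, simplified])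
    have cj: "completion t e p \<sigma>' j \<le> K * Cs" if j: "j < n" for j
    proof (cases "j \<in> L")
      case True
      have "a1 j < m \<and> compl t e (a1 j) (s1 j) (p j) \<le> F1 (a1 j)" using S1 True unfolding sinv_def by blast
      then have "completion t e p \<sigma>' j \<le> F1 (a1 j)" "a1 j < m"
        using S1a True unfolding completion_def by auto
      then show ?thesis using F1le KCs by (meson order.trans)
    next
      case False
      then have jd: "j \<in> {..<n} - L" using j by simp
      obtain G a0 s0 Pl0 where G: "sinv t e m p Pl0 G a0 s0" "Pl0 \<subseteq> {..<n}"
          "ect_ok t e m p G j (fst \<sigma>' j)" "snd \<sigma>' j = G (fst \<sigma>' j)"
        using S2 jd by blast
      have SP: "(\<Sum>x\<in>Pl0. p x) \<le> (\<Sum>i<m. cum t e i Cs)"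
      proof -
        have "(\<Sum>x\<in>Pl0. p x) \<le> (\<Sum>x<n. p x)" by (rule sum_mono2) (use G(2) pnn in auto)
        then show ?thesis using tot by linarith
      qed
      have b1: "completion t e p \<sigma>' j \<le> Cs + p j / e0"
        using ect_bound[OF M e0 G(1) SP Cs0 G(3)] pnn j G(4) unfolding completion_def by simp
      have cd: "card L = d"
      proof (rule ccontr)
        assume "card L \<noteq> d"
        then have "card L = n" using cardL by (simp add: min_def split: if_splits)
        then have "L = {..<n}" using Ls by (simp add: card_subset_eq)
        then show False using jd by simp
      qed
      have "real d * p j = (\<Sum>l\<in>L. p j)" using cd by simp
      also have "\<dots> \<le> (\<Sum>l\<in>L. p l)" by (rule sum_mono) (use Lbig jd in auto)
      also have "\<dots> \<le> (\<Sum>x<n. p x)" by (rule sum_mono2) (use Ls pnn in auto)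
      finally have "real d * p j \<le> real m * Cs" using tot totm by linarith
      then have "p j \<le> real m * Cs / real d" using assms(3) by (simp add: field_simps)
      then have "p j / e0 \<le> real m * Cs / real d / e0" using divide_right_mono[of "p j" "real m * Cs / real d" e0] e0 by simp
      also have "\<dots> = (real m / (real d * e0)) * Cs" by simp
      finally have "Cs + p j / e0 \<le> K * Cs" unfolding K_def by (simp add: algebra_simps)
      then show ?thesis using b1 by linarith
    qed
    have "makespan t e p n \<sigma>' \<le> K * Cs"
      by (rule makespan_le) (use cj K1 Cs0 in auto)
    then show ?thesis using le Cs_def by simp
  qed
  have feas: "feasible t e m p n \<sigma>"
  proof -
    obtain F2 where S: "sinv t e m p {..<n} F2 (fst \<sigma>) (snd \<sigma>)"
      using alg_run_props[OF f0(2) Ls f0(1) P M] by blast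
    then show ?thesis unfolding feasible_def sinv_def completion_def by auto
  qed
  have K0: "0 < K" using K1 by simp
  have "makespan t e p n \<sigma> / K \<le> opt_makespan t e m p n"
    unfolding opt_makespan_def
  proof (rule cInf_greatest)
    show "{makespan t e p n \<sigma> |\<sigma>. feasible t e m p n \<sigma>} \<noteq> {}" using feas by blast
    fix x assume "x \<in> {makespan t e p n \<sigma> |\<sigma>. feasible t e m p n \<sigma>}"
    then obtain \<sigma>s where "feasible t e m p n \<sigma>s" "x = makespan t e p n \<sigma>s" by blast
    then show "makespan t e p n \<sigma> / K \<le> x" using key K0 by (simp add: divide_le_eq mult.commute)
  qed
  then have "makespan t e p n \<sigma> \<le> K * opt_makespan t e m p n" using K0 by (simp add: divide_le_eq mult.commute)
  then show ?thesis unfolding K_def .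
qed

end
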